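(* Assume the abc conjecture. Let $n$ be an odd positive integer. For a large real number $A$ and a square-free integer $d$, let $R(d)$ denote the number of integers $a$ with $A\le |a|\le 2A$ and $d=1-a^n$. Then $$\sum_{d \text{ square-free}} R(d)\gg A$$ as $A\to\infty$.
   Context: The abc conjecture asserts: for every $\epsilon>0$ and all positive coprime integers $a,b,c$ with $a+b=c$, one has $c\ll_\epsilon N(a,b,c)^{1+\epsilon}$, where $N(a,b,c)$ is the product of the distinct primes dividing $abc$. *)

theory Defs
  imports Complex_Main "HOL-Computational_Algebra.Computational_Algebra"
begin

definition abc_radical :: "nat \<Rightarrow> nat \<Rightarrow> nat \<Rightarrow> nat" where
  "abc_radical a b c = (\<Prod>p\<in>prime_factors (a * b * c). p)"

definition abc_conjecture :: bool where
  "abc_conjecture \<longleftrightarrow>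
     (\<forall>\<epsilon>::real. \<epsilon> > 0 \<longrightarrow>
        (\<exists>K::real. K > 0 \<and>
          (\<forall>a b c :: nat. 0 < a \<longrightarrow> 0 < b \<longrightarrow> 0 < c \<longrightarrow>
             coprime a b \<longrightarrow> coprime a c \<longrightarrow> coprime b c \<longrightarrow> a + b = c \<longrightarrow>
             real c \<le> K * real (abc_radical a b c) powr (1 + \<epsilon>))))"

definition R_count :: "nat \<Rightarrow> real \<Rightarrow> int \<Rightarrow> nat" where
  "R_count n A d = card {a::int. A \<le> real_of_int \<bar>a\<bar> \<and> real_of_int \<bar>a\<bar> \<le> 2 * A \<and> d = 1 - a ^ n}"

end

theory Submission
  imports Defs "HOL-Number_Theory.Number_Theory"
begin

lemma dvd_sq_imp: "(a::'a::comm_semiring_1) ^ 2 dvd b \<Longrightarrow> a dvd b"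
  unfolding power2_eq_square by (rule dvd_mult_left)

lemma roots_mod_p:
  fixes p d :: nat
  assumes "prime p" "d > 0"
  shows "card {x \<in> {0..int p - 1}. x ^ d mod int p = 1} \<le> d"
proof -
  interpret R: residues_prime p "residue_ring (int p)"
    by (simp add: residues_prime_def assms)
  have fin: "finite (carrier (residue_ring (int p)))" by (simp add: R.res_carrier_eq)
  have eq: "{x \<in> carrier (residue_ring (int p)). x [^]\<^bsub>residue_ring (int p)\<^esub> d = \<one>\<^bsub>residue_ring (int p)\<^esub>}
     = {x \<in> {0..int p - 1}. x ^ d mod int p = 1}"
  proof -
    have "x [^]\<^bsub>residue_ring (int p)\<^esub> d = x ^ d mod int p" if "x \<in> {0..int p - 1}" for x
    proof -
      have "x mod int p = x" using that by auto
      then show ?thesis using R.pow_cong[of x d] by simp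
    qed
    then show ?thesis by (auto simp: R.res_carrier_eq R.res_one_eq)
  qed
  show ?thesis using R.num_roots_le_deg[OF fin, of d] assms(2) eq by simp
qed

lemma lift_unique:
  fixes p k :: nat and x y :: int
  assumes p: "prime p" and pk: "\<not> p dvd k"
    and xy: "[x = y] (mod int p)"
    and hx: "int p ^ 2 dvd x ^ k - 1" and hy: "int p ^ 2 dvd y ^ k - 1"
  shows "int p ^ 2 dvd x - y"
proof -
  define S where "S = (\<Sum>i<k. y ^ (k - Suc i) * x ^ i)"
  have fac: "x ^ k - y ^ k = (x - y) * S" unfolding S_def by (rule power_diff_sumr2)
  have "[S = (\<Sum>i<k. y ^ (k - Suc i) * y ^ i)] (mod int p)"
    unfolding S_def by (intro cong_sum cong_mult cong_refl cong_pow xy)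
  moreover have "(\<Sum>i<k. y ^ (k - Suc i) * y ^ i) = of_nat k * y ^ (k - 1)"
  proof -
    have "y ^ (k - Suc i) * y ^ i = y ^ (k - 1)" if "i < k" for i
    proof -
      have "k - Suc i + i = k - 1" using that by simp
      thus ?thesis using power_add[of y "k - Suc i" i] by simp
    qed
    then show ?thesis by simp
  qed
  ultimately have Sc: "[S = int k * y ^ (k - 1)] (mod int p)" by simp
  have p1: "int p ^ 2 dvd x ^ k - 1 - (y ^ k - 1)" using hx hy by (rule dvd_diff)
  hence "int p ^ 2 dvd (x - y) * S" using fac by simp
  have ny: "\<not> int p dvd y"
  proof
    assume "int p dvd y"
    hence "int p dvd y ^ k" using pk by (cases k) auto
    moreover have "int p dvd y ^ k - 1" using hy by (rule dvd_sq_imp)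
    ultimately have "int p dvd y ^ k - (y ^ k - 1)" by (rule dvd_diff)
    hence "int p dvd 1" by simp
    thus False using p by (simp add: prime_int_iff)
  qed
  have pint: "prime (int p)" using p by simp
  have nS: "\<not> int p dvd S"
  proof
    assume "int p dvd S"
    hence "int p dvd int k * y ^ (k - 1)" using Sc cong_dvd_iff by blast
    hence "int p dvd int k \<or> int p dvd y ^ (k - 1)" using pint prime_dvd_mult_iff by blast
    moreover have "\<not> int p dvd int k" using pk by simp
    moreover have "\<not> int p dvd y ^ (k - 1)" using ny prime_dvd_power[OF pint] by blast
    ultimately show False by blast
  qed
  have "coprime (int p ^ 2) S" using nS pint
    by (simp add: prime_imp_coprime)
  thus ?thesis using \<open>int p ^ 2 dvd (x - y) * S\<close> coprime_dvd_mult_left_iff by blast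
qed

lemma card_spaced:
  fixes S :: "int set" and m :: int
  assumes m: "m > 0" and LU: "L \<le> U" and sub: "S \<subseteq> {L..U}"
    and sp: "\<And>c c'. c \<in> S \<Longrightarrow> c' \<in> S \<Longrightarrow> m dvd c - c'"
  shows "real (card S) \<le> real_of_int (U - L) / m + 1"
proof -
  note True = LU
  have inj: "inj_on (\<lambda>c. (c - L) div m) S"
  proof
    fix c c' assume c: "c \<in> S" "c' \<in> S" "(c - L) div m = (c' - L) div m"
    have "m dvd (c - L) - (c' - L)" using sp c by simp
    hence "(c - L) mod m = (c' - L) mod m" by (simp add: mod_eq_dvd_iff)
    hence "c - L = c' - L" using c(3) by (metis div_mult_mod_eq)
    thus "c = c'" by simp
  qed
  have "(\<lambda>c. (c - L) div m) ` S \<subseteq> {0..(U - L) div m}"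
  proof
    fix z assume "z \<in> (\<lambda>c. (c - L) div m) ` S"
    then obtain c where c: "c \<in> S" "z = (c - L) div m" by auto
    have "L \<le> c" "c \<le> U" using c sub by auto
    hence "0 \<le> (c - L) div m" "(c - L) div m \<le> (U - L) div m"
      using m by (auto intro: zdiv_mono1 div_int_pos_iff[THEN iffD2])
    thus "z \<in> {0..(U - L) div m}" using c by auto
  qed
  hence "card S \<le> card {0..(U - L) div m}"
    using card_inj_on_le[OF inj] by blast
  also have "\<dots> = nat ((U - L) div m + 1)" by simp
  finally have c1: "real (card S) \<le> real (nat ((U - L) div m + 1))" by (simp only: of_nat_le_iff)
  have "0 \<le> (U - L) div m" using True m by (simp add: div_int_pos_iff)
  hence "real (nat ((U - L) div m + 1)) = real_of_int ((U - L) div m) + 1" by simp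
  with c1 have "real (card S) \<le> real_of_int ((U - L) div m) + 1" by simp
  also have "real_of_int ((U - L) div m) \<le> real_of_int (U - L) / m"
    using real_of_int_div4[of "U - L" m] by simp
  finally show ?thesis by simp
qed

lemma count_Bp:
  fixes p k :: nat and P L U :: int
  assumes p: "prime p" and pk: "\<not> p dvd k" and k: "k > 0" and pP: "\<not> int p dvd P" and LU: "L \<le> U"
  shows "real (card {c \<in> {L..U}. int p ^ 2 dvd (P * c) ^ k - 1})
          \<le> real k * (real_of_int (U - L) / real_of_int (int p ^ 2) + 1)"
proof -
  define S where "S = {c \<in> {L..U}. int p ^ 2 dvd (P * c) ^ k - 1}"
  define Rr where "Rr = {x \<in> {0..int p - 1}. x ^ k mod int p = 1}"
  define F where "F r = {c \<in> S. (P * c) mod int p = r}" for r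
  have p1: "int p > 1" using p prime_gt_1_nat by auto
  have pint: "prime (int p)" using p by simp
  have sub: "S \<subseteq> (\<Union>r\<in>Rr. F r)"
  proof
    fix c assume c: "c \<in> S"
    have "int p dvd (P * c) ^ k - 1" using c unfolding S_def
      by (auto intro: dvd_sq_imp)
    hence "(P * c) ^ k mod int p = 1 mod int p" by (simp add: mod_eq_dvd_iff)
    hence "((P * c) mod int p) ^ k mod int p = 1" using p1 by (simp add: power_mod)
    moreover have "(P * c) mod int p \<in> {0..int p - 1}" using p1 by auto
    ultimately have "(P * c) mod int p \<in> Rr" unfolding Rr_def by auto
    thus "c \<in> (\<Union>r\<in>Rr. F r)" using c unfolding F_def by auto
  qed
  have finR: "finite Rr" unfolding Rr_def by (rule finite_subset[of _ "{0..int p - 1}"]) auto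
  have cardR: "card Rr \<le> k" unfolding Rr_def using roots_mod_p[OF p k] .
  have fibre: "real (card (F r)) \<le> real_of_int (U - L) / real_of_int (int p ^ 2) + 1" for r
  proof (rule card_spaced)
    show "0 < int p ^ 2" using p1 by simp
    show "L \<le> U" by fact
    show "F r \<subseteq> {L..U}" unfolding F_def S_def by auto
    fix c c' assume cc: "c \<in> F r" "c' \<in> F r"
    hence "[P * c = P * c'] (mod int p)" unfolding F_def cong_def by auto
    hence "int p ^ 2 dvd P * c - P * c'"
      using lift_unique[OF p pk] cc unfolding F_def S_def by auto
    hence "int p ^ 2 dvd P * (c - c')" by (simp add: right_diff_distrib)
    moreover have "coprime (int p ^ 2) P" using pP pint by (simp add: prime_imp_coprime)
    ultimately show "int p ^ 2 dvd c - c'" using coprime_dvd_mult_right_iff by blast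
  qed
  have "card S \<le> card (\<Union>r\<in>Rr. F r)"
  proof (rule card_mono[OF _ sub])
    have "F r \<subseteq> {L..U}" for r unfolding F_def S_def by auto
    hence "finite (F r)" for r by (rule finite_subset) simp
    thus "finite (\<Union>r\<in>Rr. F r)" using finR by blast
  qed
  also have "\<dots> \<le> (\<Sum>r\<in>Rr. card (F r))" by (rule card_UN_le[OF finR])
  finally have "real (card S) \<le> (\<Sum>r\<in>Rr. real (card (F r)))"
    by (metis of_nat_le_iff of_nat_sum)
  also have "\<dots> \<le> (\<Sum>r\<in>Rr. real_of_int (U - L) / real_of_int (int p ^ 2) + 1)"
    by (rule sum_mono) (rule fibre)
  also have "\<dots> = real (card Rr) * (real_of_int (U - L) / real_of_int (int p ^ 2) + 1)" by simp
  also have "\<dots> \<le> real k * (real_of_int (U - L) / real_of_int (int p ^ 2) + 1)"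
    using cardR LU p1 by (intro mult_right_mono) auto
  finally show ?thesis unfolding S_def .
qed

lemma tele:
  fixes M K :: nat
  assumes "M \<ge> 1"
  shows "(\<Sum>m\<in>{M<..K}. 1 / real m ^ 2) \<le> 1 / real M"
proof -
  have "(\<Sum>m\<in>{M<..K}. 1 / real m ^ 2) \<le> 1 / real M - 1 / real (max M K)"
  proof (induction K)
    case 0
    then show ?case by simp
  next
    case (Suc K)
    show ?case
    proof (cases "Suc K \<le> M")
      case True
      then have "{M<..Suc K} = {}" by auto
      then show ?thesis using True by (simp add: max_def)
    next
      case False
      hence e: "{M<..Suc K} = insert (Suc K) {M<..K}" by auto
      have mx: "max M K = K" "max M (Suc K) = Suc K" using False by auto
      have K1: "real K \<ge> 1" using False assms by auto
      have "1 / real (Suc K) ^ 2 \<le> 1 / (real K * real (Suc K))"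
        using K1 by (intro divide_left_mono) (auto simp: power2_eq_square)
      also have "\<dots> = 1 / real K - 1 / real (Suc K)" using K1 by (simp add: field_simps)
      finally have "1 / real (Suc K) ^ 2 \<le> 1 / real K - 1 / real (Suc K)" .
      then show ?thesis using Suc.IH e mx by simp
    qed
  qed
  also have "\<dots> \<le> 1 / real M" by simp
  finally show ?thesis .
qed

lemma rad_le:
  fixes x :: nat assumes "x > 0"
  shows "(\<Prod>p\<in>prime_factors x. p) \<le> x"
proof -
  have "(\<Prod>p\<in>prime_factors x. p) \<le> (\<Prod>p\<in>prime_factors x. p ^ multiplicity p x)"
  proof (rule prod_mono)
    fix p assume p: "p \<in> prime_factors x"
    hence "multiplicity p x \<ge> 1" using assms
      by (simp add: prime_factors_multiplicity)
    moreover have "p > 0" using p by (auto dest: in_prime_factors_imp_prime prime_gt_0_nat)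
    ultimately show "0 \<le> p \<and> p \<le> p ^ multiplicity p x"
      using self_le_power[of p "multiplicity p x"] by simp
  qed
  also have "\<dots> = x" using prod_prime_factors[of x] assms by simp
  finally show ?thesis .
qed

lemma rad_subset_le:
  fixes A B :: "nat set" assumes "finite B" "A \<subseteq> B" "0 \<notin> B"
  shows "(\<Prod>p\<in>A. p) \<le> (\<Prod>p\<in>B. p)"
proof -
  have "(\<Prod>p\<in>A. p) dvd (\<Prod>p\<in>B. p)" by (rule prod_dvd_prod_subset[OF assms(1,2)])
  moreover have "(\<Prod>p\<in>B. p) > 0" using assms(3) by (intro prod_pos) (metis gr0I)
  ultimately show ?thesis by (simp add: dvd_imp_le)
qed

lemma abc_pair:
  fixes eps :: real and e :: nat
  assumes abc: abc_conjecture and eps: "eps > 0" and e: "e > 0"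
  obtains K :: real where "K > 0"
    "\<And>x p q. x \<ge> 2 \<Longrightarrow> prime p \<Longrightarrow> prime q \<Longrightarrow> p \<noteq> q \<Longrightarrow> (p * q) ^ 2 dvd x ^ e - 1 \<Longrightarrow>
       real x ^ e \<le> K * (real x ^ (e + 1) / real (p * q)) powr (1 + eps)"
proof -
  obtain K :: real where K: "K > 0" and KK: "\<And>a b c :: nat. 0 < a \<Longrightarrow> 0 < b \<Longrightarrow> 0 < c \<Longrightarrow>
             coprime a b \<Longrightarrow> coprime a c \<Longrightarrow> coprime b c \<Longrightarrow> a + b = c \<Longrightarrow>
             real c \<le> K * real (abc_radical a b c) powr (1 + eps)"
    using abc eps unfolding abc_conjecture_def by blast
  show ?thesis
  proof (rule that[OF K])
    fix x p q :: nat
    assume x: "x \<ge> 2" and p: "prime p" and q: "prime q" and pq: "p \<noteq> q"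
      and d: "(p * q) ^ 2 dvd x ^ e - 1"
    define b where "b = x ^ e - 1"
    have xe: "x ^ e \<ge> 2" using self_le_power[of x e] x e by simp
    have b0: "b > 0" unfolding b_def using xe by simp
    have c: "x ^ e = Suc b" unfolding b_def using xe by simp
    have cop: "coprime b (x ^ e)" unfolding c by simp
    have main: "real (x ^ e) \<le> K * real (abc_radical 1 b (x ^ e)) powr (1 + eps)"
      by (rule KK) (use b0 c cop in auto)
    obtain t where t: "b = (p * q) ^ 2 * t" using d unfolding b_def by auto
    have t0: "t > 0" using b0 t by (auto intro: gr0I)
    define b' where "b' = p * q * t"
    have bb': "b = p * q * b'" unfolding b'_def t by (simp add: power2_eq_square)
    have p0: "p > 0" "q > 0" using p q prime_gt_0_nat by auto
    have b'0: "b' > 0" unfolding b'_def using p0 t0 by simp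
    have pfsub: "prime_factors b \<subseteq> prime_factors b'"
    proof
      fix r assume r: "r \<in> prime_factors b"
      hence rp: "prime r" "r dvd p * q * b'" using bb' by (auto simp: prime_factors_dvd)
      hence "r dvd p * q \<or> r dvd b'" using prime_dvd_mult_iff by blast
      moreover have "p * q dvd b'" unfolding b'_def by simp
      ultimately have "r dvd b'" by (meson dvd_trans)
      thus "r \<in> prime_factors b'" using rp b'0 by (auto simp: prime_factors_dvd)
    qed
    have rb: "(\<Prod>r\<in>prime_factors b. r) \<le> b'"
    proof -
      have "0 \<notin> prime_factors b'" using in_prime_factors_imp_prime not_prime_0 by blast
      hence "(\<Prod>r\<in>prime_factors b. r) \<le> (\<Prod>r\<in>prime_factors b'. r)"
        using pfsub by (intro rad_subset_le) simp_all
      also have "\<dots> \<le> b'" by (rule rad_le[OF b'0])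
      finally show ?thesis .
    qed
    have x0: "x > 0" using x by simp
    have pfe: "prime_factors (1 * b * x ^ e) = prime_factors b \<union> prime_factors x"
      using b0 x0 e by (simp add: prime_factors_product prime_factors_power)
    have "(\<Prod>r\<in>prime_factors b \<union> prime_factors x. r)
        = (\<Prod>r\<in>prime_factors b. r) * (\<Prod>r\<in>prime_factors x - prime_factors b. r)"
    proof -
      have "prime_factors b \<union> prime_factors x = prime_factors b \<union> (prime_factors x - prime_factors b)" by auto
      moreover have "(\<Prod>r\<in>prime_factors b \<union> (prime_factors x - prime_factors b). r)
          = (\<Prod>r\<in>prime_factors b. r) * (\<Prod>r\<in>prime_factors x - prime_factors b. r)"
        by (rule prod.union_disjoint) auto
      ultimately show ?thesis by simp
    qed
    also have "(\<Prod>r\<in>prime_factors x - prime_factors b. r) \<le> x"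
    proof -
      have "0 \<notin> prime_factors x" using in_prime_factors_imp_prime not_prime_0 by blast
      hence "(\<Prod>r\<in>prime_factors x - prime_factors b. r) \<le> (\<Prod>r\<in>prime_factors x. r)"
        by (intro rad_subset_le) auto
      also have "\<dots> \<le> x" by (rule rad_le[OF x0])
      finally show ?thesis .
    qed
    hence "(\<Prod>r\<in>prime_factors b. r) * (\<Prod>r\<in>prime_factors x - prime_factors b. r) \<le> b' * x"
      using rb by (intro mult_mono) auto
    finally have radle: "abc_radical 1 b (x ^ e) \<le> b' * x"
      unfolding abc_radical_def pfe .
    have "real (b' * x) = real b / real (p * q) * real x"
      using bb' p0 by (simp add: field_simps)
    also have "\<dots> \<le> real x ^ e / real (p * q) * real x"
      using c p0 by (intro mult_right_mono divide_right_mono) auto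
    also have "\<dots> = real x ^ (e + 1) / real (p * q)" by (simp add: field_simps)
    finally have "real (abc_radical 1 b (x ^ e)) \<le> real x ^ (e + 1) / real (p * q)"
      using radle[THEN of_nat_mono[where 'a=real]] by linarith
    hence "real (abc_radical 1 b (x ^ e)) powr (1 + eps) \<le> (real x ^ (e + 1) / real (p * q)) powr (1 + eps)"
      using eps by (intro powr_mono2) auto
    hence "K * real (abc_radical 1 b (x ^ e)) powr (1 + eps) \<le> K * (real x ^ (e + 1) / real (p * q)) powr (1 + eps)"
      using K by (intro mult_left_mono) auto
    with main show "real x ^ e \<le> K * (real x ^ (e + 1) / real (p * q)) powr (1 + eps)"
      by simp
  qed
qed

lemma powr_contra:
  fixes n :: nat and K u T :: real
  assumes n: "n \<ge> 1" and K: "K > 0" and u: "u \<ge> 1" and T: "(u / 2) powr (6/5) \<le> T"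
    and h: "u ^ (2 * n) \<le> K * (u ^ (2 * n + 1) / T) powr (1 + 1 / (20 * real n))"
  shows "u powr (1/10) \<le> 4 * K"
proof -
  define a where "a = 1 + 1 / (20 * real n)"
  define e where "e = real (2 * n + 1)"
  define f where "f = real (2 * n)"
  have a1: "a \<ge> 1" "a \<le> 21/20" using n unfolding a_def by (auto simp: field_simps)
  have u0: "u > 0" using u by simp
  have P0: "(u / 2) powr (6/5) > 0" using u0 by simp
  hence T0: "T > 0" using T by linarith
  have pe: "u ^ (2 * n + 1) = u powr e" unfolding e_def by (rule powr_realpow[OF u0, symmetric])
  have pf: "u ^ (2 * n) = u powr f" unfolding f_def by (rule powr_realpow[OF u0, symmetric])
  have "u ^ (2 * n + 1) / T \<le> u ^ (2 * n + 1) / (u / 2) powr (6/5)"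
  proof (rule divide_left_mono[OF T])
    show "0 \<le> u ^ (2 * n + 1)" using u0 by simp
    show "0 < T * (u / 2) powr (6/5)" using P0 T0 by simp
  qed
  also have "\<dots> = 2 powr (6/5) * u powr (e - 6/5)"
  proof -
    have eq1: "(u / 2) powr (6/5) = u powr (6/5) / 2 powr (6/5)" by (rule powr_divide)
    have eq2: "u powr e / u powr (6/5) = u powr (e - 6/5)"
      by (rule powr_diff[symmetric])
    have gen: "c / (a / b) = b * (c / a)" for a b c :: real
      by (cases "a = 0"; cases "b = 0") (simp_all add: field_simps)
    show ?thesis by (simp only: pe eq1 gen eq2)
  qed
  finally have b1: "u ^ (2 * n + 1) / T \<le> 2 powr (6/5) * u powr (e - 6/5)" .
  have "(u ^ (2 * n + 1) / T) powr a \<le> (2 powr (6/5) * u powr (e - 6/5)) powr a"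
    using b1 a1 T0 u0 by (intro powr_mono2) auto
  also have "\<dots> = (2 powr (6/5)) powr a * (u powr (e - 6/5)) powr a"
    using powr_mult[of "2 powr (6/5)" "u powr (e - 6/5)" a] by simp
  also have "\<dots> = 2 powr (6/5 * a) * u powr ((e - 6/5) * a)"
    by (simp only: powr_powr)
  also have "\<dots> \<le> 4 * u powr (f - 1/10)"
  proof (rule mult_mono)
    have "2 powr (6/5 * a) \<le> 2 powr (2::real)" using a1 by (intro powr_mono) auto
    thus "2 powr (6/5 * a) \<le> 4" by simp
    have "(e - 6/5) * a = f - 1/10 - 1/(100 * n)"
      using n unfolding a_def e_def f_def by (simp add: field_simps)
    hence "(e - 6/5) * a \<le> f - 1/10" using n by simp
    thus "u powr ((e - 6/5) * a) \<le> u powr (f - 1/10)"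
      using u by (intro powr_mono) auto
  qed simp_all
  finally have "(u ^ (2 * n + 1) / T) powr a \<le> 4 * u powr (f - 1/10)" .
  hence "u ^ (2 * n) \<le> K * (4 * u powr (f - 1/10))"
    using h K mult_left_mono[of "(u ^ (2 * n + 1) / T) powr a" "4 * u powr (f - 1/10)" K] unfolding a_def by linarith
  moreover have "u ^ (2 * n) = u powr (1/10) * u powr (f - 1/10)"
    unfolding pf by (simp add: powr_add[symmetric])
  ultimately have "u powr (1/10) * u powr (f - 1/10) \<le> (4 * K) * u powr (f - 1/10)"
    by simp
  thus ?thesis using u0 by (simp add: mult_le_cancel_right)
qed

lemma prime_sq_nat:
  fixes z :: int assumes "z \<noteq> 0" "\<not> squarefree z"
  shows "\<exists>p::nat. prime p \<and> int p ^ 2 dvd z"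
proof -
  obtain p1 :: int where p1: "prime p1" "p1 ^ 2 dvd z"
    using assms squarefree_factorial_semiring by blast
  have "p1 > 0" using p1 prime_gt_0_int by blast
  hence "int (nat p1) = p1" by simp
  thus ?thesis using p1 by (metis prime_nat_int_transfer)
qed

lemma sum_ge_card:
  fixes n :: nat and A :: real
  shows "card {a::int. A \<le> real_of_int \<bar>a\<bar> \<and> real_of_int \<bar>a\<bar> \<le> 2 * A \<and> squarefree (1 - a ^ n)}
     \<le> (\<Sum>d \<in> {d::int. squarefree d \<and> R_count n A d \<noteq> 0}. R_count n A d)"
proof -
  define S where "S = {a::int. A \<le> real_of_int \<bar>a\<bar> \<and> real_of_int \<bar>a\<bar> \<le> 2 * A}"
  define G where "G = {a::int. A \<le> real_of_int \<bar>a\<bar> \<and> real_of_int \<bar>a\<bar> \<le> 2 * A \<and> squarefree (1 - a ^ n)}"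
  define D where "D = {d::int. squarefree d \<and> R_count n A d \<noteq> 0}"
  define f where "f a = 1 - a ^ n" for a :: int
  have finS: "finite S"
  proof (rule finite_subset)
    show "S \<subseteq> {-\<lceil>2*A\<rceil>..\<lceil>2*A\<rceil>}"
    proof
      fix a assume "a \<in> S"
      hence "real_of_int \<bar>a\<bar> \<le> 2 * A" unfolding S_def by auto
      hence "real_of_int \<bar>a\<bar> \<le> real_of_int \<lceil>2*A\<rceil>" using le_of_int_ceiling[of "2*A"] by linarith
      hence "\<bar>a\<bar> \<le> \<lceil>2*A\<rceil>" by (simp only: of_int_le_iff)
      thus "a \<in> {-\<lceil>2*A\<rceil>..\<lceil>2*A\<rceil>}" by auto
    qed
  qed simp
  have finG: "finite G" using finS by (rule finite_subset[rotated]) (auto simp: S_def G_def)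
  have fib: "{a \<in> G. f a = d} = {a::int. A \<le> real_of_int \<bar>a\<bar> \<and> real_of_int \<bar>a\<bar> \<le> 2 * A \<and> d = 1 - a ^ n}"
    if "d \<in> f ` G" for d
    using that unfolding G_def f_def by auto
  have "card G = card (\<Union>d\<in>f ` G. {a \<in> G. f a = d})"
    by (rule arg_cong[where f=card]) auto
  also have "\<dots> = (\<Sum>d\<in>f ` G. card {a \<in> G. f a = d})"
    by (rule card_UN_disjoint) (use finG in auto)
  also have "\<dots> = (\<Sum>d\<in>f ` G. R_count n A d)"
    by (rule sum.cong) (auto simp: R_count_def fib)
  also have "\<dots> \<le> (\<Sum>d\<in>D. R_count n A d)"
  proof (rule sum_mono2)
    have "D \<subseteq> f ` S"
    proof
      fix d assume "d \<in> D"
      hence "R_count n A d \<noteq> 0" unfolding D_def by auto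
      hence "{a::int. A \<le> real_of_int \<bar>a\<bar> \<and> real_of_int \<bar>a\<bar> \<le> 2 * A \<and> d = 1 - a ^ n} \<noteq> {}"
        unfolding R_count_def by (metis card.empty)
      then obtain a where "A \<le> real_of_int \<bar>a\<bar> \<and> real_of_int \<bar>a\<bar> \<le> 2 * A \<and> d = 1 - a ^ n" by auto
      thus "d \<in> f ` S" unfolding S_def f_def by auto
    qed
    thus "finite D" using finS finite_surj by blast
    show "f ` G \<subseteq> D"
    proof
      fix d assume d: "d \<in> f ` G"
      then obtain a where a: "a \<in> G" "d = f a" by auto
      have "finite {a \<in> G. f a = d}" using finG by simp
      moreover have "a \<in> {a \<in> G. f a = d}" using a by simp
      ultimately have "card {a \<in> G. f a = d} \<noteq> 0" by (metis card_0_eq empty_iff)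
      hence "R_count n A d \<noteq> 0" using fib[OF d] unfolding R_count_def by simp
      moreover have "squarefree d" using a unfolding G_def f_def by auto
      ultimately show "d \<in> D" unfolding D_def by auto
    qed
  qed auto
  finally show ?thesis unfolding G_def D_def .
qed

theorem lemma6:
  fixes n :: nat
  assumes abc: abc_conjecture
    and n_pos: "n > 0"
    and n_odd: "odd n"
  shows "\<exists>c::real. c > 0 \<and>
           (\<forall>\<^sub>F A in at_top.
              c * A \<le> real (\<Sum>d \<in> {d::int. squarefree d \<and> R_count n A d \<noteq> 0}. R_count n A d))"
proof -
  define eps :: real where "eps = 1 / (20 * real n)"
  have eps0: "eps > 0" using n_pos by (simp add: eps_def)
  have e0: "2 * n > 0" using n_pos by simp
  obtain K where K0: "K > 0" and KK: "\<And>x p q. x \<ge> 2 \<Longrightarrow> prime p \<Longrightarrow> prime q \<Longrightarrow> p \<noteq> q \<Longrightarrow>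
       (p * q) ^ 2 dvd x ^ (2 * n) - 1 \<Longrightarrow>
       real x ^ (2 * n) \<le> K * (real x ^ (2 * n + 1) / real (p * q)) powr (1 + eps)"
    using abc_pair[OF abc eps0 e0] by blast
  define M :: nat where "M = 8 * n"
  define P :: nat where "P = fact M"
  have P0: "P > 0" unfolding P_def by simp
  have Ppos: "real P > 0" using P0 by simp
  have M8: "M \<ge> 8" using n_pos unfolding M_def by simp
  define B :: real where "B = 4 * real P * (1 + 2 * real n)"
  define A0 :: real where "A0 = max (max ((4 * K) powr 10 + 1) (2 * real P + 2)) (B powr (5/2) + 1)"
  define Gd where "Gd A = {a::int. A \<le> real_of_int \<bar>a\<bar> \<and> real_of_int \<bar>a\<bar> \<le> 2 * A \<and> squarefree (1 - a ^ n)}" for A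
  have key: "A / (2 * real P) \<le> real (card (Gd A))" if A: "A \<ge> A0" for A
  proof -
    have A1: "A \<ge> (4 * K) powr 10 + 1" "A \<ge> 2 * real P + 2" "A \<ge> B powr (5/2) + 1"
      using A unfolding A0_def by auto
    have Apos: "A > 0" using A1 Ppos by linarith
    define L where "L = \<lceil>A / real P\<rceil>"
    define U where "U = \<lfloor>2 * A / real P\<rfloor>"
    define Y where "Y = A powr (3/5)"
    define N where "N = nat \<lfloor>Y\<rfloor>"
    define Bp where "Bp p = {c \<in> {L..U}. int p ^ 2 dvd (int P * c) ^ (2 * n) - 1}" for p :: nat
    define MB where "MB = {c \<in> {L..U}. \<exists>p. prime p \<and> M < p \<and> real p \<le> Y \<and> int p ^ 2 dvd (int P * c) ^ (2 * n) - 1}"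
    define G0 where "G0 = {L..U} - MB"
    have LU1: "real_of_int L \<le> A / real P + 1" "real_of_int U \<ge> 2 * A / real P - 1"
      "real_of_int U \<le> 2 * A / real P" "real_of_int L \<ge> A / real P"
      unfolding L_def U_def by linarith+
    have AP: "A / real P \<ge> 2" using A1 Ppos by (simp add: field_simps)
    have LU: "L \<le> U" using LU1 AP by linarith
    have UL: "real_of_int (U - L) \<le> A / real P" using LU1 by simp
    have cardLU: "real (card {L..U}) \<ge> A / real P - 1" using LU1 LU by simp
    have Y1: "Y \<ge> 0" unfolding Y_def by simp
    have MBsub: "MB \<subseteq> (\<Union>p\<in>{p \<in> {M<..N}. prime p}. Bp p)"
    proof
      fix c assume "c \<in> MB"
      then obtain p where p: "c \<in> {L..U}" "prime p" "M < p" "real p \<le> Y"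
        "int p ^ 2 dvd (int P * c) ^ (2 * n) - 1" unfolding MB_def by auto
      have "int p \<le> \<lfloor>Y\<rfloor>" using p(4) by (simp add: le_floor_iff)
      hence "p \<le> N" unfolding N_def by simp
      thus "c \<in> (\<Union>p\<in>{p \<in> {M<..N}. prime p}. Bp p)" using p unfolding Bp_def by auto
    qed
    have Bpc: "real (card (Bp p)) \<le> real (2 * n) * (real_of_int (U - L) / real_of_int (int p ^ 2) + 1)"
      if p: "p \<in> {M<..N}" "prime p" for p
      unfolding Bp_def
    proof (rule count_Bp)
      show "prime p" by fact
      show "\<not> p dvd 2 * n"
      proof
        assume "p dvd 2 * n"
        hence "p \<le> 2 * n" using e0 by (simp add: dvd_imp_le)
        thus False using p unfolding M_def by simp
      qed
      show "0 < 2 * n" by fact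
      have "\<not> p dvd P"
        using p prime_dvd_fact_iff[of p M] unfolding P_def by simp
      thus "\<not> int p dvd int P" by simp
      show "L \<le> U" by fact
    qed
    have finPr: "finite {p \<in> {M<..N}. prime p}" by simp
    have "card MB \<le> card (\<Union>p\<in>{p \<in> {M<..N}. prime p}. Bp p)"
    proof (rule card_mono[OF _ MBsub])
      have "finite (Bp p)" for p unfolding Bp_def by (rule finite_subset[of _ "{L..U}"]) auto
      thus "finite (\<Union>p\<in>{p \<in> {M<..N}. prime p}. Bp p)" using finPr by blast
    qed
    also have "\<dots> \<le> (\<Sum>p\<in>{p \<in> {M<..N}. prime p}. card (Bp p))" by (rule card_UN_le[OF finPr])
    finally have "real (card MB) \<le> (\<Sum>p\<in>{p \<in> {M<..N}. prime p}. real (card (Bp p)))"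
      by (metis of_nat_le_iff of_nat_sum)
    also have "\<dots> \<le> (\<Sum>p\<in>{p \<in> {M<..N}. prime p}. real (2 * n) * (real_of_int (U - L) / real_of_int (int p ^ 2) + 1))"
      by (rule sum_mono) (use Bpc in auto)
    also have "\<dots> \<le> (\<Sum>p\<in>{M<..N}. real (2 * n) * (real_of_int (U - L) / real_of_int (int p ^ 2) + 1))"
      by (rule sum_mono2) (use LU in auto)
    also have "\<dots> = real (2 * n) * real_of_int (U - L) * (\<Sum>p\<in>{M<..N}. 1 / real p ^ 2) + real (2 * n) * real (card {M<..N})"
      by (simp add: sum.distrib sum_distrib_left ring_distribs)
    also have "\<dots> \<le> real (2 * n) * (A / real P) * (1 / real M) + real (2 * n) * Y"
    proof (rule add_mono)
      have "(\<Sum>p\<in>{M<..N}. 1 / real p ^ 2) \<le> 1 / real M" using tele[of M N] M8 by simp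
      moreover have "(\<Sum>p\<in>{M<..N}. 1 / real p ^ 2) \<ge> 0" by (rule sum_nonneg) simp
      ultimately show "real (2 * n) * real_of_int (U - L) * (\<Sum>p\<in>{M<..N}. 1 / real p ^ 2)
          \<le> real (2 * n) * (A / real P) * (1 / real M)"
        using UL LU Apos Ppos by (intro mult_mono) auto
      have "real (card {M<..N}) \<le> real N" by simp
      also have "real N \<le> Y" unfolding N_def using Y1 by linarith
      finally show "real (2 * n) * real (card {M<..N}) \<le> real (2 * n) * Y"
        by (intro mult_left_mono) auto
    qed
    also have "real (2 * n) * (A / real P) * (1 / real M) = A / (4 * real P)"
      unfolding M_def using n_pos by (simp add: field_simps)
    finally have MBc: "real (card MB) \<le> A / (4 * real P) + 2 * real n * Y" by simp
    have MBs: "MB \<subseteq> {L..U}" unfolding MB_def by auto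
    have finMB: "finite MB" by (rule finite_subset[OF MBs]) simp
    have "card G0 = card {L..U} - card MB" unfolding G0_def
      by (rule card_Diff_subset[OF finMB MBs])
    moreover have "card MB \<le> card {L..U}" by (rule card_mono) (auto simp: MB_def)
    ultimately have G0c: "real (card G0) \<ge> A / real P - 1 - (A / (4 * real P) + 2 * real n * Y)"
      using cardLU MBc by (simp add: of_nat_diff)
    have grow: "1 + 2 * real n * Y \<le> A / (4 * real P)"
    proof -
      have A1': "A \<ge> 1" using A1 Ppos by linarith
      have Yge: "Y \<ge> 1" unfolding Y_def using A1' by (simp add: ge_one_powr_ge_zero)
      have B0: "B > 0" unfolding B_def using Ppos by simp
      have "B = (B powr (5/2)) powr (2/5)" using B0 by (simp add: powr_powr)
      also have "\<dots> \<le> A powr (2/5)" using A1 B0 by (intro powr_mono2) auto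
      finally have BA: "B \<le> A powr (2/5)" .
      have "1 + 2 * real n * Y \<le> (1 + 2 * real n) * Y" using Yge by (simp add: algebra_simps)
      also have "\<dots> = B / (4 * real P) * Y" unfolding B_def using Ppos by simp
      also have "\<dots> \<le> A powr (2/5) / (4 * real P) * Y"
        using BA Ppos Y1 by (intro mult_right_mono divide_right_mono) auto
      also have "\<dots> = A / (4 * real P)"
        unfolding Y_def using Apos by (simp add: powr_add[symmetric])
      finally show ?thesis .
    qed
    have G0c': "real (card G0) \<ge> A / (2 * real P)"
    proof -
      have "A / (4 * real P) = (A / real P) / 4" "A / (2 * real P) = (A / real P) / 2" by simp_all
      thus ?thesis using G0c grow by linarith
    qed
    have claim: "squarefree (1 - (int P * c) ^ n) \<or> squarefree (1 - (- (int P * c)) ^ n)"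
      if c: "c \<in> G0" for c
    proof (rule ccontr)
      assume nsq: "\<not> (squarefree (1 - (int P * c) ^ n) \<or> squarefree (1 - (- (int P * c)) ^ n))"
      have cLU: "c \<in> {L..U}" and cMB: "c \<notin> MB" using c unfolding G0_def by auto
      have cpos: "c > 0"
      proof -
        have "real_of_int c \<ge> A / real P" using cLU LU1 by simp
        thus ?thesis using AP by linarith
      qed
      define x where "x = nat (int P * c)"
      have xi: "int x = int P * c" unfolding x_def using cpos by simp
      have xA: "A \<le> real x" "real x \<le> 2 * A"
      proof -
        have "real x = real P * real_of_int c" using xi by (metis of_int_mult of_int_of_nat_eq)
        moreover have "real_of_int c \<ge> A / real P" "real_of_int c \<le> 2 * A / real P"
          using cLU LU1 by auto
        ultimately show "A \<le> real x" "real x \<le> 2 * A" using Ppos by (auto simp: field_simps)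
      qed
      have x2: "x \<ge> 2" using xA A1 Ppos by linarith
      have Pdx: "int P dvd int x" using xi by simp
      define X where "X = int x ^ n"
      have X2: "X \<ge> 2" unfolding X_def using x2 n_pos
        by (metis int_ops(3) le_trans of_nat_le_iff of_nat_power self_le_power zero_less_iff_neq_zero one_le_numeral dual_order.trans)
      define z1 where "z1 = 1 - X"
      define z2 where "z2 = 1 + X"
      have z1e: "1 - (int P * c) ^ n = z1" unfolding z1_def X_def xi by simp
      have z2e: "1 - (- (int P * c)) ^ n = z2" unfolding z2_def X_def xi using n_odd by simp
      have z10: "z1 \<noteq> 0" "z2 \<noteq> 0" unfolding z1_def z2_def using X2 by auto
      obtain p where p: "prime p" "int p ^ 2 dvd z1" using prime_sq_nat[OF z10(1)] nsq z1e by auto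
      obtain q where q: "prime q" "int q ^ 2 dvd z2" using prime_sq_nat[OF z10(2)] nsq z2e by auto
      have big: "M < r" if r: "prime r" "int r dvd 1 - X \<or> int r dvd 1 + X" for r
      proof (rule ccontr)
        assume "\<not> M < r"
        hence "r dvd P" unfolding P_def using prime_dvd_fact_iff[OF r(1)] by simp
        hence "int r dvd int x" using Pdx by (meson dvd_trans int_dvd_int_iff)
        moreover have "int x dvd int x ^ n" using n_pos by (simp add: dvd_power)
        ultimately have "int r dvd X" unfolding X_def by (rule dvd_trans)
        hence "int r dvd 1" using r(2) by (metis add_diff_cancel_right' diff_add_cancel dvd_add_left_iff dvd_diff)
        thus False using r(1) by simp
      qed
      have pdv: "int p dvd z1" using p(2) by (rule dvd_sq_imp)
      have qdv: "int q dvd z2" using q(2) by (rule dvd_sq_imp)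
      have pM: "M < p" using big[OF p(1)] pdv unfolding z1_def by auto
      have qM: "M < q" using big[OF q(1)] qdv unfolding z2_def by auto
      have prod: "(int P * c) ^ (2 * n) - 1 = - (z1 * z2)"
        unfolding z1_def z2_def X_def xi[symmetric] by (simp add: power_mult power2_eq_square algebra_simps)
      have "int p ^ 2 dvd (int P * c) ^ (2 * n) - 1" unfolding prod using p(2) by simp
      hence pY: "\<not> real p \<le> Y" using cMB cLU p(1) pM unfolding MB_def by auto
      have "int q ^ 2 dvd (int P * c) ^ (2 * n) - 1" unfolding prod using q(2) by simp
      hence qY: "\<not> real q \<le> Y" using cMB cLU q(1) qM unfolding MB_def by auto
      have pq: "p \<noteq> q"
      proof
        assume "p = q"
        hence "int p dvd z1 + z2" using pdv qdv by simp
        hence "int p dvd 2" unfolding z1_def z2_def by simp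
        hence "p dvd 2" by (metis int_dvd_int_iff of_nat_numeral)
        hence "p \<le> 2" by (simp add: dvd_imp_le)
        thus False using pM M8 by simp
      qed
      have "int ((p * q) ^ 2) dvd z1 * z2" using p(2) q(2) by (simp add: power_mult_distrib mult_dvd_mono)
      hence "int ((p * q) ^ 2) dvd int x ^ (2 * n) - 1" using prod xi by (metis dvd_minus_iff)
      moreover have "int x ^ (2 * n) - 1 = int (x ^ (2 * n) - 1)"
        using x2 by (simp add: of_nat_diff)
      ultimately have dv: "(p * q) ^ 2 dvd x ^ (2 * n) - 1" by (simp only: int_dvd_int_iff)
      have ineq: "real x ^ (2 * n) \<le> K * (real x ^ (2 * n + 1) / real (p * q)) powr (1 + eps)"
        by (rule KK[OF x2 p(1) q(1) pq dv])
      have "Y * Y \<le> real (p * q)" using pY qY Y1 by (simp add: mult_mono)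
      moreover have "Y * Y = A powr (6/5)" unfolding Y_def by (simp add: powr_add[symmetric])
      moreover have "(real x / 2) powr (6/5) \<le> A powr (6/5)" using xA by (intro powr_mono2) auto
      ultimately have T: "(real x / 2) powr (6/5) \<le> real (p * q)" by linarith
      have "real x powr (1/10) \<le> 4 * K"
        by (rule powr_contra[OF _ K0 _ T]) (use n_pos x2 ineq eps_def in auto)
      moreover have "real x powr (1/10) > ((4 * K) powr 10) powr (1/10)"
        using xA A1 K0 by (intro powr_less_mono2) auto
      moreover have "((4 * K) powr 10) powr (1/10) = 4 * K"
      proof -
        have "((4 * K) powr 10) powr (1/10) = (4 * K) powr (10 * (1/10))" by (rule powr_powr)
        also have "(10::real) * (1/10) = 1" by simp
        also have "(4 * K) powr 1 = 4 * K" using K0 by (intro powr_one) simp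
        finally show ?thesis .
      qed
      ultimately show False by simp
    qed
    define g where "g c = (if squarefree (1 - (int P * c) ^ n) then int P * c else - (int P * c))" for c
    have gabs: "\<bar>g c\<bar> = int P * c" if "c \<in> G0" for c
    proof -
      have "c \<ge> L" using that unfolding G0_def by auto
      moreover have "real_of_int L > 0" using LU1 AP by linarith
      ultimately have "c > 0" by linarith
      thus ?thesis unfolding g_def using P0 by auto
    qed
    have inj: "inj_on g G0"
    proof
      fix c c' assume "c \<in> G0" "c' \<in> G0" "g c = g c'"
      hence "int P * c = int P * c'" using gabs by metis
      thus "c = c'" using P0 by simp
    qed
    have img: "g ` G0 \<subseteq> Gd A"
    proof
      fix a assume "a \<in> g ` G0"
      then obtain c where c: "c \<in> G0" "a = g c" by auto
      have cLU: "c \<in> {L..U}" using c unfolding G0_def by auto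
      have "real_of_int \<bar>a\<bar> = real P * real_of_int c" using gabs[OF c(1)] c(2) by simp
      moreover have "real_of_int c \<ge> A / real P" "real_of_int c \<le> 2 * A / real P"
        using cLU LU1 by auto
      ultimately have "A \<le> real_of_int \<bar>a\<bar>" "real_of_int \<bar>a\<bar> \<le> 2 * A" using Ppos by (auto simp: field_simps)
      moreover have "squarefree (1 - a ^ n)" using claim[OF c(1)] c(2) unfolding g_def by auto
      ultimately show "a \<in> Gd A" unfolding Gd_def by auto
    qed
    have finGd: "finite (Gd A)"
    proof (rule finite_subset)
      show "Gd A \<subseteq> {-\<lceil>2*A\<rceil>..\<lceil>2*A\<rceil>}"
      proof
        fix a assume "a \<in> Gd A"
        hence "real_of_int \<bar>a\<bar> \<le> 2 * A" unfolding Gd_def by auto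
        hence "real_of_int \<bar>a\<bar> \<le> real_of_int \<lceil>2*A\<rceil>" using le_of_int_ceiling[of "2*A"] by linarith
        hence "\<bar>a\<bar> \<le> \<lceil>2*A\<rceil>" by (simp only: of_int_le_iff)
        thus "a \<in> {-\<lceil>2*A\<rceil>..\<lceil>2*A\<rceil>}" by auto
      qed
    qed simp
    have "card G0 \<le> card (Gd A)"
      using card_inj_on_le[OF inj img finGd] .
    thus ?thesis using G0c' by linarith
  qed
  show ?thesis
  proof (intro exI conjI)
    show "1 / (2 * real P) > 0" using Ppos by simp
    show "\<forall>\<^sub>F A in at_top. 1 / (2 * real P) * A \<le> real (\<Sum>d \<in> {d::int. squarefree d \<and> R_count n A d \<noteq> 0}. R_count n A d)"
    proof (rule eventually_mono[OF eventually_ge_at_top[of A0]])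
      fix A assume "A0 \<le> A"
      hence "A / (2 * real P) \<le> real (card (Gd A))" by (rule key)
      also have "\<dots> \<le> real (\<Sum>d \<in> {d::int. squarefree d \<and> R_count n A d \<noteq> 0}. R_count n A d)"
        using sum_ge_card[of A n] unfolding Gd_def by (simp only: of_nat_le_iff)
      finally show "1 / (2 * real P) * A \<le> real (\<Sum>d \<in> {d::int. squarefree d \<and> R_count n A d \<noteq> 0}. R_count n A d)"
        by simp
    qed
  qed
qed

end
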